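(* Let $M,N\ge1$ be integers, $\mathbf G\in\mathbb C^{N\times M}$, $\mathbf h_{\mathrm d}\in\mathbb C^M$, $\mathbf h_{\mathrm r}\in\mathbb C^N$, $P_0>0$, $\Gamma>0$, $\sigma^2>0$. For $\mathbf v\in\mathbb C^N$ let $\mathbf\Phi=\mathrm{diag}(\mathbf v)$ and $\mathbf h(\mathbf v)=\mathbf h_{\mathrm d}+\mathbf G^H\mathbf\Phi^H\mathbf h_{\mathrm r}$. For a positive semidefinite $\mathbf R\in\mathbb C^{M\times M}$ let $f(\mathbf R)=\mathrm{tr}\big((\mathbf G\mathbf R\mathbf G^H)^{-1}\big)$ when $\mathbf G\mathbf R\mathbf G^H$ is invertible, and $f(\mathbf R)=+\infty$ otherwise. Consider (single user, $K=1$): (P1): minimize $f(\mathbf w\mathbf w^H+\mathbf R_0)$ over $\mathbf w\in\mathbb C^M$, Hermitian $\mathbf R_0\in\mathbb C^{M\times M}$, and $\mathbf v\in\mathbb C^N$, subject to $\frac{|\mathbf h(\mathbf v)^H\mathbf w|^2}{\mathbf h(\mathbf v)^H\mathbf R_0\mathbf h(\mathbf v)+\sigma^2}\ge\Gamma$, $\|\mathbf w\|^2+\mathrm{tr}(\mathbf R_0)\le P_0$, $\mathbf R_0\succeq\mathbf 0$, and $|v_n|=1$ for all $n=1,\dots,N$; (P2): the same problem with the SINR constraint replaced by $\frac{|\mathbf h(\mathbf v)^H\mathbf w|^2}{\sigma^2}\ge\Gamma$. Then the optimal values of (P1) and (P2) are identical.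
   Context: Setting: an IRS-enabled integrated sensing and communication system with a base station of $M$ antennas, an IRS with $N$ unit-modulus reflecting elements (reflection vector $\mathbf v$), and one single-antenna user. $\mathbf h_{\mathrm d}^H$ is the base-station-to-user channel, $\mathbf h_{\mathrm r}^H$ the IRS-to-user channel, $\mathbf G$ the base-station-to-IRS channel, $\mathbf w$ the information beamformer, $\mathbf R_0$ the dedicated sensing-signal covariance. (P1) corresponds to a user that cannot cancel sensing-signal interference, (P2) to one that can. The objective is (up to a positive constant) the Cramér-Rao bound for estimating the target response matrix with respect to the IRS. *)

theory Defs
  imports "HOL-Analysis.Analysis"
begin

text \<open>Complex matrices are rendered as complex^'c^'r (rows indexed by 'r);
  the dimensions M and N are the cardinalities of finite index types.\<close>

definition cadj :: "complex^'c^'r \<Rightarrow> complex^'r^'c" where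
  "cadj A = (\<chi> i j. cnj (A $ j $ i))"

definition cdiag :: "complex^'n \<Rightarrow> complex^'n^'n" where
  "cdiag v = (\<chi> i j. if i = j then v $ i else 0)"

definition cinner_h :: "complex^'n \<Rightarrow> complex^'n \<Rightarrow> complex" where
  "cinner_h x y = (\<Sum>i\<in>UNIV. cnj (x $ i) * y $ i)"

definition couter :: "complex^'n \<Rightarrow> complex^'n^'n" where
  "couter w = (\<chi> i j. w $ i * cnj (w $ j))"

definition hermitian :: "complex^'n^'n \<Rightarrow> bool" where
  "hermitian R \<longleftrightarrow> cadj R = R"

definition psd :: "complex^'n^'n \<Rightarrow> bool" where
  "psd R \<longleftrightarrow> hermitian R \<and> (\<forall>x. 0 \<le> Re (cinner_h x (R *v x)))"

definition heff :: "complex^'m \<Rightarrow> complex^'m^'n \<Rightarrow> complex^'n \<Rightarrow> complex^'n \<Rightarrow> complex^'m" where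
  "heff h_d G h_r v = h_d + cadj G *v (cadj (cdiag v) *v h_r)"

text \<open>CRB objective f(R) = tr((G R G^H)^{-1}), +infinity if not invertible.
  (The trace of the inverse of a Hermitian positive definite matrix is real.)\<close>
definition crb :: "complex^'m^'n \<Rightarrow> complex^'m^'m \<Rightarrow> ereal" where
  "crb G R = (if invertible (G ** R ** cadj G)
              then ereal (Re (trace (matrix_inv (G ** R ** cadj G)))) else \<infinity>)"

definition common_feas :: "real \<Rightarrow> complex^'m \<Rightarrow> complex^'m^'m \<Rightarrow> complex^'n \<Rightarrow> bool" where
  "common_feas P0 w R0 v \<longleftrightarrow>
     hermitian R0 \<and> (norm w)\<^sup>2 + Re (trace R0) \<le> P0 \<and> psd R0 \<and> (\<forall>n. cmod (v $ n) = 1)"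

definition feas_P1 :: "complex^'m \<Rightarrow> complex^'m^'n \<Rightarrow> complex^'n \<Rightarrow> real \<Rightarrow> real \<Rightarrow> real
    \<Rightarrow> complex^'m \<Rightarrow> complex^'m^'m \<Rightarrow> complex^'n \<Rightarrow> bool" where
  "feas_P1 h_d G h_r P0 \<Gamma> \<sigma>2 w R0 v \<longleftrightarrow>
     (let h = heff h_d G h_r v in
       (cmod (cinner_h h w))\<^sup>2 / (Re (cinner_h h (R0 *v h)) + \<sigma>2) \<ge> \<Gamma>)
     \<and> common_feas P0 w R0 v"

definition feas_P2 :: "complex^'m \<Rightarrow> complex^'m^'n \<Rightarrow> complex^'n \<Rightarrow> real \<Rightarrow> real \<Rightarrow> real
    \<Rightarrow> complex^'m \<Rightarrow> complex^'m^'m \<Rightarrow> complex^'n \<Rightarrow> bool" where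
  "feas_P2 h_d G h_r P0 \<Gamma> \<sigma>2 w R0 v \<longleftrightarrow>
     (let h = heff h_d G h_r v in (cmod (cinner_h h w))\<^sup>2 / \<sigma>2 \<ge> \<Gamma>)
     \<and> common_feas P0 w R0 v"

text \<open>Optimal values (infimum in the extended reals; +infinity if infeasible).\<close>
definition opt_P1 :: "complex^'m \<Rightarrow> complex^'m^'n \<Rightarrow> complex^'n \<Rightarrow> real \<Rightarrow> real \<Rightarrow> real \<Rightarrow> ereal" where
  "opt_P1 h_d G h_r P0 \<Gamma> \<sigma>2 =
     Inf {crb G (couter w + R0) | w R0 v. feas_P1 h_d G h_r P0 \<Gamma> \<sigma>2 w R0 v}"

definition opt_P2 :: "complex^'m \<Rightarrow> complex^'m^'n \<Rightarrow> complex^'n \<Rightarrow> real \<Rightarrow> real \<Rightarrow> real \<Rightarrow> ereal" where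
  "opt_P2 h_d G h_r P0 \<Gamma> \<sigma>2 =
     Inf {crb G (couter w + R0) | w R0 v. feas_P2 h_d G h_r P0 \<Gamma> \<sigma>2 w R0 v}"

end

theory Submission
  imports Defs
begin
lemma ci_add: "cinner_h x (a + b) = cinner_h x a + cinner_h x b"
  by (simp add: cinner_h_def distrib_left sum.distrib)
lemma ci_diff: "cinner_h x (a - b) = cinner_h x a - cinner_h x b"
  by (simp add: cinner_h_def right_diff_distrib sum_subtractf)
lemma ci_scale: "cinner_h x (c *s a) = c * cinner_h x a"
  by (simp add: cinner_h_def sum_distrib_left algebra_simps)
lemma ci_ldiff: "cinner_h (x - y) a = cinner_h x a - cinner_h y a"
  by (simp add: cinner_h_def left_diff_distrib sum_subtractf)
lemma ci_lscale: "cinner_h (c *s x) a = cnj c * cinner_h x a"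
  by (simp add: cinner_h_def sum_distrib_left algebra_simps)
lemma ci_cnj: "cinner_h y x = cnj (cinner_h x y)"
  by (simp add: cinner_h_def mult.commute)
lemma ci_adj: "cinner_h (A *v x) y = cinner_h x (cadj A *v y)"
proof -
  have "cinner_h (A *v x) y = (\<Sum>i\<in>UNIV. \<Sum>j\<in>UNIV. cnj (A $ i $ j) * cnj (x $ j) * y $ i)"
    unfolding cinner_h_def matrix_vector_mult_def
    by (simp add: sum_distrib_right)
  also have "\<dots> = (\<Sum>j\<in>UNIV. \<Sum>i\<in>UNIV. cnj (A $ i $ j) * cnj (x $ j) * y $ i)"
    by (rule sum.swap)
  also have "\<dots> = cinner_h x (cadj A *v y)"
    unfolding cinner_h_def matrix_vector_mult_def cadj_def
    by (simp add: sum_distrib_left mult_ac)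
  finally show ?thesis .
qed
lemma mv_add: "(A + B) *v x = A *v x + B *v x"
  by (rule matrix_vector_mult_add_rdistrib)
lemma mv_diff: "((A::complex^'n^'m) - B) *v x = A *v x - B *v x"
  by (rule matrix_vector_mult_diff_rdistrib)
lemma mv_scale: "(A::complex^'n^'m) *v (c *s x) = c *s (A *v x)"
  by (simp add: matrix_vector_mult_def vec_eq_iff sum_distrib_left mult_ac)
lemma couter_mv: "couter w *v x = cinner_h w x *s w"
  by (simp add: couter_def matrix_vector_mult_def cinner_h_def vec_eq_iff sum_distrib_left algebra_simps)
lemma couter_herm: "hermitian (couter w)"
  by (simp add: hermitian_def cadj_def couter_def vec_eq_iff)
lemma herm_add: "hermitian A \<Longrightarrow> hermitian B \<Longrightarrow> hermitian (A + B)"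
  by (simp add: hermitian_def cadj_def vec_eq_iff)
lemma herm_diff: "hermitian A \<Longrightarrow> hermitian B \<Longrightarrow> hermitian (A - B)"
  by (simp add: hermitian_def cadj_def vec_eq_iff)
lemma couter_scale: "couter (c *s w) = (\<chi> i j. (c * cnj c) * (couter w $ i $ j))"
  by (simp add: couter_def vec_eq_iff)
lemma trace_couter: "Re (trace (couter w)) = (norm w)\<^sup>2"
proof -
  have "Re (trace (couter w)) = (\<Sum>i\<in>UNIV. (cmod (w $ i))\<^sup>2)"
    by (simp add: trace_def couter_def complex_mult_cnj cmod_power2)
  also have "\<dots> = (norm w)\<^sup>2" by (simp add: norm_vec_def L2_set_def sum_nonneg)
  finally show ?thesis .
qed
lemma trace_diff: "trace (A - B) = trace A - trace (B::complex^'n^'n)"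
  by (simp add: trace_def sum_subtractf)
lemma trace_add: "trace (A + B) = trace A + trace (B::complex^'n^'n)"
  by (simp add: trace_def sum.distrib)
lemma ci_self_real: "hermitian S \<Longrightarrow> cinner_h h (S *v h) = complex_of_real (Re (cinner_h h (S *v h)))"
proof -
  assume "hermitian S"
  then have "cinner_h h (S *v h) = cnj (cinner_h h (S *v h))"
    by (metis ci_adj ci_cnj hermitian_def)
  then show ?thesis by (metis Reals_cnj_iff complex_is_Real_iff of_real_Re)
qed

lemma q_expand:
  fixes S :: "complex^'m^'m" and x h :: "complex^'m" and c :: real
  assumes herm: "hermitian S" and cdef: "c = Re (cinner_h h (S *v h))" and cpos: "c > 0"
  defines "w' \<equiv> complex_of_real (1 / sqrt c) *s (S *v h)"
  shows "cinner_h x ((S - couter w') *v x) =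
     cinner_h (x - (cinner_h h (S *v x) / complex_of_real c) *s h) (S *v (x - (cinner_h h (S *v x) / complex_of_real c) *s h))"
proof -
  define a where "a = cinner_h h (S *v x)"
  define t where "t = a / complex_of_real c"
  have qhh: "cinner_h h (S *v h) = complex_of_real c"
    using ci_self_real[OF herm, of h] cdef by simp
  have adj: "\<And>u v. cinner_h (S *v u) v = cinner_h u (S *v v)"
    using herm by (simp add: ci_adj hermitian_def)
  have qxh: "cinner_h x (S *v h) = cnj a"
    by (metis a_def adj ci_cnj)
  have w'x: "cinner_h w' x = complex_of_real (1 / sqrt c) * a"
    by (simp add: w'_def ci_lscale adj a_def)
  have xw': "cinner_h x w' = complex_of_real (1 / sqrt c) * cnj a"
    by (simp add: w'_def ci_scale qxh)
  have sq: "complex_of_real (1 / sqrt c) * complex_of_real (1 / sqrt c) = 1 / complex_of_real c"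
    using cpos by (simp flip: of_real_mult)
  have lhs: "cinner_h x ((S - couter w') *v x) = cinner_h x (S *v x) - a * cnj a / complex_of_real c"
    using sq by (simp add: mv_diff ci_diff couter_mv ci_scale w'x xw' mult_ac)
  have rhs: "cinner_h (x - t *s h) (S *v (x - t *s h)) =
      cinner_h x (S *v x) - t * cnj a - cnj t * (a - t * complex_of_real c)"
    by (simp add: ci_ldiff ci_lscale matrix_vector_mult_diff_distrib mv_scale ci_diff ci_scale qxh qhh a_def[symmetric]) (simp add: algebra_simps)
  have e: "t * cnj a + cnj t * (a - t * complex_of_real c) = a * cnj a / complex_of_real c"
    using cpos unfolding t_def by (simp add: field_simps)
  have "cinner_h x ((S - couter w') *v x) = cinner_h (x - t *s h) (S *v (x - t *s h))"
    unfolding lhs rhs using e by (metis diff_diff_eq)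
  then show ?thesis unfolding t_def a_def .
qed

lemma P1_imp_P2:
  assumes s: "\<sigma>2 > 0" and f: "feas_P1 h_d G h_r P0 \<Gamma> \<sigma>2 w R0 v"
  shows "feas_P2 h_d G h_r P0 \<Gamma> \<sigma>2 w R0 v"
proof -
  define h where "h = heff h_d G h_r v"
  have cf: "common_feas P0 w R0 v" and g: "(cmod (cinner_h h w))\<^sup>2 / (Re (cinner_h h (R0 *v h)) + \<sigma>2) \<ge> \<Gamma>"
    using f by (auto simp: feas_P1_def h_def Let_def)
  have r: "Re (cinner_h h (R0 *v h)) \<ge> 0" using cf by (simp add: common_feas_def psd_def)
  have "(cmod (cinner_h h w))\<^sup>2 / (Re (cinner_h h (R0 *v h)) + \<sigma>2) \<le> (cmod (cinner_h h w))\<^sup>2 / \<sigma>2"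
    using r s by (intro divide_left_mono) auto
  then show ?thesis using g cf by (simp add: feas_P2_def h_def Let_def)
qed

lemma P2_imp_P1:
  assumes gp: "\<Gamma> > 0" and s: "\<sigma>2 > 0" and f: "feas_P2 h_d G h_r P0 \<Gamma> \<sigma>2 w R0 v"
  shows "\<exists>w' R0'. feas_P1 h_d G h_r P0 \<Gamma> \<sigma>2 w' R0' v \<and> couter w' + R0' = couter w + R0"
proof -
  define h where "h = heff h_d G h_r v"
  have cf: "common_feas P0 w R0 v" and g: "(cmod (cinner_h h w))\<^sup>2 / \<sigma>2 \<ge> \<Gamma>"
    using f by (auto simp: feas_P2_def h_def Let_def)
  have hR0: "hermitian R0" and psdR0: "psd R0" and pw: "(norm w)\<^sup>2 + Re (trace R0) \<le> P0"
    using cf by (auto simp: common_feas_def)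
  define S where "S = couter w + R0"
  have hS: "hermitian S" unfolding S_def by (intro herm_add couter_herm hR0)
  have qS: "\<And>x. Re (cinner_h x (S *v x)) = (cmod (cinner_h x w))\<^sup>2 + Re (cinner_h x (R0 *v x))"
  proof -
    fix x
    have "cinner_h x (S *v x) = cinner_h w x * cinner_h x w + cinner_h x (R0 *v x)"
      by (simp add: S_def mv_add ci_add couter_mv ci_scale)
    also have "cinner_h w x * cinner_h x w = complex_of_real ((cmod (cinner_h x w))\<^sup>2)"
      by (metis ci_cnj complex_norm_square mult.commute)
    finally show "Re (cinner_h x (S *v x)) = (cmod (cinner_h x w))\<^sup>2 + Re (cinner_h x (R0 *v x))"
      by simp
  qed
  have psdS: "\<And>x. Re (cinner_h x (S *v x)) \<ge> 0"
    using qS psdR0 unfolding psd_def by (metis add_nonneg_nonneg zero_le_power2)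
  define c where "c = Re (cinner_h h (S *v h))"
  have ge: "c \<ge> (cmod (cinner_h h w))\<^sup>2"
    using qS[of h] psdR0 unfolding c_def psd_def by auto
  have "(cmod (cinner_h h w))\<^sup>2 \<ge> \<Gamma> * \<sigma>2" using g s by (simp add: pos_le_divide_eq)
  moreover have "\<Gamma> * \<sigma>2 > 0" using gp s by simp
  ultimately have cpos: "c > 0" using ge by linarith
  define w' where "w' = complex_of_real (1 / sqrt c) *s (S *v h)"
  define R0' where "R0' = S - couter w'"
  have key: "\<And>x. cinner_h x (R0' *v x) =
     cinner_h (x - (cinner_h h (S *v x) / complex_of_real c) *s h) (S *v (x - (cinner_h h (S *v x) / complex_of_real c) *s h))"
    unfolding R0'_def w'_def by (rule q_expand[OF hS c_def cpos])
  have qhh: "cinner_h h (S *v h) = complex_of_real c"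
    using ci_self_real[OF hS, of h] c_def by simp
  have hR0': "hermitian R0'" unfolding R0'_def by (intro herm_diff hS couter_herm)
  have psdR0': "psd R0'" unfolding psd_def using hR0' key psdS by simp
  have zero: "cinner_h h (R0' *v h) = 0"
  proof -
    have "complex_of_real c / complex_of_real c = 1" using cpos by simp
    then have "cinner_h h (R0' *v h) = cinner_h 0 (S *v 0)"
      using key[of h] by (simp add: qhh)
    then show ?thesis by (simp add: cinner_h_def)
  qed
  have hw': "cinner_h h w' = complex_of_real (sqrt c)"
  proof -
    have "cinner_h h w' = complex_of_real (1 / sqrt c) * complex_of_real c"
      by (simp add: w'_def ci_scale qhh)
    also have "\<dots> = complex_of_real (sqrt c)"
    proof -
      have ss: "sqrt c * sqrt c = c" using cpos by simp
      have "sqrt c > 0" using cpos by simp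
      then have "1 / sqrt c * c = sqrt c" using ss by (simp add: field_simps)
      then show ?thesis by (metis of_real_mult)
    qed
    finally show ?thesis .
  qed
  have sinr: "(cmod (cinner_h h w'))\<^sup>2 / (Re (cinner_h h (R0' *v h)) + \<sigma>2) \<ge> \<Gamma>"
  proof -
    have "(cmod (cinner_h h w'))\<^sup>2 / (Re (cinner_h h (R0' *v h)) + \<sigma>2) = c / \<sigma>2"
      using cpos by (simp add: zero hw')
    moreover have "c / \<sigma>2 \<ge> (cmod (cinner_h h w))\<^sup>2 / \<sigma>2"
      using ge s by (simp add: divide_right_mono)
    ultimately show ?thesis using g by linarith
  qed
  have sumeq: "couter w' + R0' = S" unfolding R0'_def by simp
  have pw': "(norm w')\<^sup>2 + Re (trace R0') \<le> P0"
  proof -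
    have "(norm w')\<^sup>2 + Re (trace R0') = Re (trace S)"
      using sumeq trace_couter[of w'] trace_add[of "couter w'" R0'] by simp
    also have "\<dots> = (norm w)\<^sup>2 + Re (trace R0)"
      by (simp add: S_def trace_add trace_couter)
    finally show ?thesis using pw by simp
  qed
  have "feas_P1 h_d G h_r P0 \<Gamma> \<sigma>2 w' R0' v"
    using sinr hR0' psdR0' pw' cf
    unfolding feas_P1_def common_feas_def h_def[symmetric] Let_def by simp
  note f1 = this
  have f2: "couter w' + R0' = couter w + R0" using sumeq S_def by simp
  show ?thesis by (rule exI[of _ w'], rule exI[of _ R0'], rule conjI[OF f1 f2])
qed

theorem proposition3:
  fixes G :: "complex^'m^'n" and h_d :: "complex^'m" and h_r :: "complex^'n"
    and P0 \<Gamma> \<sigma>2 :: real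
  assumes "P0 > 0" and "\<Gamma> > 0" and "\<sigma>2 > 0"
  shows "opt_P1 h_d G h_r P0 \<Gamma> \<sigma>2 = opt_P2 h_d G h_r P0 \<Gamma> \<sigma>2"
proof -
  have "{crb G (couter w + R0) | w R0 v. feas_P1 h_d G h_r P0 \<Gamma> \<sigma>2 w R0 v}
      = {crb G (couter w + R0) | w R0 v. feas_P2 h_d G h_r P0 \<Gamma> \<sigma>2 w R0 v}"
  proof (rule set_eqI, rule iffI)
    fix y assume "y \<in> {crb G (couter w + R0) | w R0 v. feas_P1 h_d G h_r P0 \<Gamma> \<sigma>2 w R0 v}"
    then obtain w R0 v where y: "y = crb G (couter w + R0)" and f: "feas_P1 h_d G h_r P0 \<Gamma> \<sigma>2 w R0 v"
      by blast
    have "feas_P2 h_d G h_r P0 \<Gamma> \<sigma>2 w R0 v" using P1_imp_P2[OF assms(3) f] .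
    then show "y \<in> {crb G (couter w + R0) | w R0 v. feas_P2 h_d G h_r P0 \<Gamma> \<sigma>2 w R0 v}"
      using y by blast
  next
    fix y assume "y \<in> {crb G (couter w + R0) | w R0 v. feas_P2 h_d G h_r P0 \<Gamma> \<sigma>2 w R0 v}"
    then obtain w R0 v where y: "y = crb G (couter w + R0)" and f: "feas_P2 h_d G h_r P0 \<Gamma> \<sigma>2 w R0 v"
      by blast
    obtain w' R0' where f1: "feas_P1 h_d G h_r P0 \<Gamma> \<sigma>2 w' R0' v" and e: "couter w' + R0' = couter w + R0"
      using P2_imp_P1[OF assms(2,3) f] by blast
    have y': "y = crb G (couter w' + R0')" using y e by simp
    show "y \<in> {crb G (couter w + R0) | w R0 v. feas_P1 h_d G h_r P0 \<Gamma> \<sigma>2 w R0 v}"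
      using y' f1 by blast
  qed
  then show ?thesis unfolding opt_P1_def opt_P2_def by simp
qed
end
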